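(* Let $F$ be a distribution on $[0,\infty)$ with unbounded support. If $0<\hat\gamma<\infty$ and $\varphi(\hat\gamma)<\infty$, then $$\liminf_{x\to\infty}\frac{\overline{F*F}(x)}{\overline{F}(x)}\le 2\varphi(\hat\gamma)\quad\text{and}\quad\limsup_{x\to\infty}\frac{\overline{F*F}(x)}{\overline{F}(x)}\ge 2\varphi(\hat\gamma).$$
   Context: $\overline{F}(x)=F(x,\infty)$, positive for all $x$; $\varphi(\gamma)=\int_0^\infty e^{\gamma x}F(dx)\in(0,\infty]$; $\hat\gamma=\sup\{\gamma:\varphi(\gamma)<\infty\}$. *)

theory Defs
  imports "HOL-Probability.Probability"
begin

definition tail :: "real measure \<Rightarrow> real \<Rightarrow> real" where
  "tail F x = measure F {x<..}"

definition mgf :: "real measure \<Rightarrow> real \<Rightarrow> ennreal" where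
  "mgf F g = (\<integral>\<^sup>+ x. ennreal (exp (g * x)) \<partial>F)"

definition gamma_hat :: "real measure \<Rightarrow> ereal" where
  "gamma_hat F = Sup {ereal g | g. mgf F g < \<infinity>}"

end

theory Submission
  imports Defs
begin

lemma tail_tonelli:
  fixes M :: "real measure" and w :: "real \<Rightarrow> real"
  assumes sM: "sets M = sets borel" and fin: "finite_measure M"
    and wm[measurable]: "w \<in> borel_measurable borel"
  shows "(\<integral>\<^sup>+u. ennreal (w u) * emeasure M {u<..} \<partial>lborel)
       = (\<integral>\<^sup>+s. (\<integral>\<^sup>+u. ennreal (w u) * indicator {..<s} u \<partial>lborel) \<partial>M)"
proof -
  interpret finite_measure M by fact
  interpret P: pair_sigma_finite lborel M
    by (intro pair_sigma_finite.intro) (auto simp: lborel.sigma_finite_measure_axioms sigma_finite_measure_axioms)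
  have [measurable_cong]: "sets M = sets borel" by fact
  have "(\<integral>\<^sup>+u. ennreal (w u) * emeasure M {u<..} \<partial>lborel)
      = (\<integral>\<^sup>+u. (\<integral>\<^sup>+s. ennreal (w u) * indicator {..<s} u \<partial>M) \<partial>lborel)"
  proof (rule nn_integral_cong)
    fix u
    have "emeasure M {u<..} = (\<integral>\<^sup>+s. indicator {u<..} s \<partial>M)"
      using sM by (subst nn_integral_indicator) auto
    also have "ennreal (w u) * \<dots> = (\<integral>\<^sup>+s. ennreal (w u) * indicator {u<..} s \<partial>M)"
      using sM by (subst nn_integral_cmult) auto
    finally show "ennreal (w u) * emeasure M {u<..} = (\<integral>\<^sup>+s. ennreal (w u) * indicator {..<s} u \<partial>M)"
      by (simp add: indicator_def)
  qed
  also have "\<dots> = (\<integral>\<^sup>+s. (\<integral>\<^sup>+u. ennreal (w u) * indicator {..<s} u \<partial>lborel) \<partial>M)"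
  proof -
    have "(\<lambda>p. ennreal (w (fst p)) * indicator {p::real\<times>real. fst p < snd p} p) \<in> borel_measurable (lborel \<Otimes>\<^sub>M M)"
      by measurable
    then have m: "(\<lambda>p. ennreal (w (fst p)) * indicator {..<snd p} (fst p)) \<in> borel_measurable (lborel \<Otimes>\<^sub>M M)"
      by (simp add: indicator_def)
    show ?thesis using P.Fubini[OF m] by simp
  qed
  finally show ?thesis .
qed

lemma nn_Ico_Icc:
  "(\<integral>\<^sup>+u. f u * indicator {a..<b} u \<partial>lborel) = (\<integral>\<^sup>+u. f u * indicator {a..b} (u::real) \<partial>lborel)"
  by (intro nn_integral_cong_AE eventually_mono[OF AE_lborel_singleton[of b]]) (auto simp: indicator_def)

lemma exp_weight:
  fixes g a r :: real
  assumes g: "g > 0"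
  shows "(\<integral>\<^sup>+u. ennreal (exp (g*u) * indicator {a..} u) * indicator {..<r} u \<partial>lborel)
        = ennreal ((exp (g*r) - exp (g*a)) / g)"
proof (cases "a \<le> r")
  case True
  have "(\<integral>\<^sup>+u. ennreal (exp (g*u) * indicator {a..} u) * indicator {..<r} u \<partial>lborel)
     = (\<integral>\<^sup>+u. ennreal (exp (g*u)) * indicator {a..<r} u \<partial>lborel)"
    by (intro nn_integral_cong) (auto simp: indicator_def)
  also have "\<dots> = (\<integral>\<^sup>+u. ennreal (exp (g*u)) * indicator {a..r} u \<partial>lborel)"
    by (rule nn_Ico_Icc)
  also have "\<dots> = ennreal (exp (g*r) / g - exp (g*a) / g)"
  proof (rule nn_integral_FTC_Icc)
    show "\<And>x. x \<in> {a..r} \<Longrightarrow> ((\<lambda>x. exp (g*x) / g) has_real_derivative exp (g*x)) (at x)"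
      using g by (auto intro!: derivative_eq_intros)
  qed (use True in auto)
  finally show ?thesis by (simp add: diff_divide_distrib)
next
  case False
  then have "exp (g*r) \<le> exp (g*a)" using g by simp
  then have "ennreal ((exp (g*r) - exp (g*a)) / g) = 0" using g
    by (simp add: divide_nonpos_pos ennreal_eq_0_iff)
  moreover have "(\<integral>\<^sup>+u. ennreal (exp (g*u) * indicator {a..} u) * indicator {..<r} u \<partial>lborel) = 0"
    using False by (subst nn_integral_0_iff_AE) (auto simp: indicator_def)
  ultimately show ?thesis by simp
qed

definition rho :: "real \<Rightarrow> real \<Rightarrow> real" where
  "rho T s = max 0 (min s T)"

definition om :: "real \<Rightarrow> real \<Rightarrow> real \<Rightarrow> real \<Rightarrow> real" where
  "om g l T u = (if u \<le> T then ((g+l)*exp((g+l)*u) - g*exp(g*u))/g else exp(g*u)*(exp(l*T)-1))"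

lemma om_measurable[measurable]: "om g l T \<in> borel_measurable borel"
  unfolding om_def by measurable

lemma nn_Ioo_Icc:
  "(\<integral>\<^sup>+u. f u * indicator {a<..<b} u \<partial>lborel) = (\<integral>\<^sup>+u. f u * indicator {a..b} (u::real) \<partial>lborel)"
  by (intro nn_integral_cong_AE eventually_mono[OF AE_conj_iff[THEN iffD2, OF conjI, OF AE_lborel_singleton[of a] AE_lborel_singleton[of b]]])
     (auto simp: indicator_def)

lemma om_weight:
  fixes g l T s :: real
  assumes g: "g > 0" and l: "l > 0" and T: "T \<ge> 0"
  shows "(\<integral>\<^sup>+u. ennreal (om g l T u * indicator {0..} u) * indicator {..<s} u \<partial>lborel)
        = ennreal ((exp (g* s + l * rho T s) - exp (g* s)) / g)"
proof -
  define F1 where "F1 u = (exp((g+l)*u) - exp(g*u))/g" for u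
  define F2 where "F2 u = exp(g*u)*(exp(l*T)-1)/g" for u
  have D1: "(F1 has_real_derivative om g l T u) (at u)" if "u \<le> T" for u
    unfolding F1_def om_def using that g
    by (auto intro!: derivative_eq_intros simp: field_simps)
  have D2: "(F2 has_real_derivative exp(g*u)*(exp(l*T)-1)) (at u)" for u
    unfolding F2_def using g by (auto intro!: derivative_eq_intros simp: field_simps)
  have nn1: "0 \<le> om g l T u" if "0 \<le> u" "u \<le> T" for u
  proof -
    have "g*exp(g*u) \<le> (g+l)*exp((g+l)*u)"
      using g l that by (intro mult_mono) (auto intro!: mult_right_mono)
    then show ?thesis unfolding om_def using that g by auto
  qed
  have I1: "(\<integral>\<^sup>+u. ennreal (om g l T u) * indicator {0..b} u \<partial>lborel) = ennreal (F1 b - F1 0)"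
    if "0 \<le> b" "b \<le> T" for b
    by (rule nn_integral_FTC_Icc) (use that D1 nn1 in auto)
  show ?thesis
  proof (cases "s \<le> 0")
    case True
    then have "rho T s = 0" unfolding rho_def by auto
    moreover have "(\<integral>\<^sup>+u. ennreal (om g l T u * indicator {0..} u) * indicator {..<s} u \<partial>lborel) = 0"
      using True by (subst nn_integral_0_iff_AE) (auto simp: indicator_def)
    ultimately show ?thesis by simp
  next
    case s0: False
    show ?thesis
    proof (cases "s \<le> T")
      case True
      have "(\<integral>\<^sup>+u. ennreal (om g l T u * indicator {0..} u) * indicator {..<s} u \<partial>lborel)
          = (\<integral>\<^sup>+u. ennreal (om g l T u) * indicator {0..<s} u \<partial>lborel)"
        by (intro nn_integral_cong) (auto simp: indicator_def)
      also have "\<dots> = (\<integral>\<^sup>+u. ennreal (om g l T u) * indicator {0..s} u \<partial>lborel)"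
        by (rule nn_Ico_Icc)
      also have "\<dots> = ennreal (F1 s - F1 0)" using I1[of s] True s0 by auto
      also have "F1 s - F1 0 = (exp (g* s + l * rho T s) - exp (g* s)) / g"
        using True s0 unfolding F1_def rho_def by (simp add: algebra_simps)
      finally show ?thesis .
    next
      case False
      have "(\<integral>\<^sup>+u. ennreal (om g l T u * indicator {0..} u) * indicator {..<s} u \<partial>lborel)
          = (\<integral>\<^sup>+u. ennreal (om g l T u) * indicator {0..T} u + ennreal (exp(g*u)*(exp(l*T)-1)) * indicator {T<..<s} u \<partial>lborel)"
        using False T by (intro nn_integral_cong) (auto simp: indicator_def om_def)
      also have "\<dots> = (\<integral>\<^sup>+u. ennreal (om g l T u) * indicator {0..T} u \<partial>lborel)
           + (\<integral>\<^sup>+u. ennreal (exp(g*u)*(exp(l*T)-1)) * indicator {T<..<s} u \<partial>lborel)"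
        by (rule nn_integral_add) auto
      also have "(\<integral>\<^sup>+u. ennreal (exp(g*u)*(exp(l*T)-1)) * indicator {T<..<s} u \<partial>lborel)
           = (\<integral>\<^sup>+u. ennreal (exp(g*u)*(exp(l*T)-1)) * indicator {T..s} u \<partial>lborel)"
        by (rule nn_Ioo_Icc)
      also have "\<dots> = ennreal (F2 s - F2 T)"
        by (rule nn_integral_FTC_Icc) (use False D2 l T in auto)
      also have "(\<integral>\<^sup>+u. ennreal (om g l T u) * indicator {0..T} u \<partial>lborel) = ennreal (F1 T - F1 0)"
        using I1[of T] T by auto
      also have "ennreal (F1 T - F1 0) + ennreal (F2 s - F2 T) = ennreal (F1 T - F1 0 + (F2 s - F2 T))"
      proof (rule ennreal_plus[symmetric])
        have "exp (g*T) \<le> exp ((g+l)*T)" using g l T by (auto intro!: mult_right_mono)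
        then show "0 \<le> F1 T - F1 0" unfolding F1_def using g by auto
        have "exp (g*T) \<le> exp (g* s)" using g False by simp
        moreover have "0 \<le> exp(l*T) - 1" using l T by simp
        moreover have "F2 s - F2 T = (exp(g * s) - exp(g*T))*(exp(l*T)-1)/g"
          unfolding F2_def using g by (simp add: field_simps)
        ultimately show "0 \<le> F2 s - F2 T" using g by simp
      qed
      also have "F1 T - F1 0 + (F2 s - F2 T) = (exp (g* s + l * rho T s) - exp (g* s)) / g"
        using False s0 T unfolding F1_def F2_def rho_def
        by (simp add: field_simps exp_add distrib_left distrib_right)
      finally show ?thesis .
    qed
  qed
qed

lemma conv_nn:
  fixes F :: "real measure"
  assumes "prob_space F" "sets F = sets borel" "f \<in> borel_measurable borel"
  shows "(\<integral>\<^sup>+s. f s \<partial>(F \<star> F)) = (\<integral>\<^sup>+x. \<integral>\<^sup>+y. f (x + y) \<partial>F \<partial>F)"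
proof -
  interpret prob_space F by fact
  show ?thesis using assms by (intro nn_integral_convolution) (auto simp: finite_measure_axioms)
qed

lemma tail_emeasure:
  fixes F :: "real measure"
  assumes "finite_measure F"
  shows "emeasure F {u<..} = ennreal (tail F u)"
  using assms unfolding tail_def by (simp add: finite_measure.emeasure_eq_measure)

lemma tail_meas:
  fixes M :: "real measure"
  assumes fin: "finite_measure M" and sM: "sets M = sets borel"
  shows "(\<lambda>u. emeasure M {u<..}) \<in> borel_measurable borel"
proof -
  have "mono (\<lambda>u. - tail M u)"
  proof (rule monoI)
    fix u v :: real assume "u \<le> v"
    then have "measure M {v<..} \<le> measure M {u<..}"
      using sM by (intro finite_measure.finite_measure_mono[OF fin]) auto
    then show "- tail M u \<le> - tail M v" unfolding tail_def by simp
  qed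
  then have m: "(\<lambda>u. - tail M u) \<in> borel_measurable borel" by (rule borel_measurable_mono)
  have [measurable]: "tail M \<in> borel_measurable borel" using borel_measurable_uminus[OF m] by simp
  have "(\<lambda>u. ennreal (tail M u)) \<in> borel_measurable borel" by measurable
  then show ?thesis by (simp add: tail_emeasure[OF fin])
qed

lemma part_limsup:
  fixes F :: "real measure" and g phi c x0 :: real
  assumes PS: "prob_space F" and sF: "sets F = sets borel"
    and AE0: "AE x in F. 0 \<le> x"
    and tpos: "\<And>x. tail F x > 0"
    and g: "g > 0" and phi: "mgf F g = ennreal phi"
    and c: "c < 2 * phi"
    and ev: "\<And>u. u \<ge> x0 \<Longrightarrow> tail (F \<star> F) u < c * tail F u"
  shows False
proof -
  interpret prob_space F by fact
  have [measurable_cong]: "sets F = sets borel" by fact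
  have finF: "finite_measure F" by (rule finite_measure_axioms)
  have finS: "finite_measure (F \<star> F)"
    using finF sF by (intro convolution_finite) auto
  have sS: "sets (F \<star> F) = sets borel" by simp
  have [measurable]: "(\<lambda>u. emeasure F {u<..}) \<in> borel_measurable borel"
    by (rule tail_meas[OF finF sF])
  have [measurable]: "(\<lambda>u. emeasure (F \<star> F) {u<..}) \<in> borel_measurable borel"
    by (rule tail_meas[OF finS sS])
  have cpos: "c > 0"
  proof -
    have "0 \<le> tail (F \<star> F) x0" unfolding tail_def by simp
    then have "0 < c * tail F x0" using ev[of x0] by simp
    then show ?thesis using tpos[of x0] by (simp add: zero_less_mult_iff)
  qed
  define m where "m n = (\<integral>\<^sup>+x. ennreal (exp (g*x) * indicator {..real n} x) \<partial>F)" for n :: nat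
  have "(SUP n. m n) = (\<integral>\<^sup>+x. (SUP n. ennreal (exp (g*x) * indicator {..real n} x)) \<partial>F)"
    unfolding m_def
  proof (rule nn_integral_monotone_convergence_SUP[symmetric])
    show "incseq (\<lambda>n x. ennreal (exp (g*x) * indicator {..real n} x))"
      by (auto simp: incseq_def le_fun_def indicator_def)
  qed auto
  also have "\<dots> = (\<integral>\<^sup>+x. ennreal (exp (g*x)) \<partial>F)"
  proof (rule nn_integral_cong)
    fix x :: real
    obtain n :: nat where n: "x \<le> real n" using real_arch_simple by blast
    show "(SUP n. ennreal (exp (g*x) * indicator {..real n} x)) = ennreal (exp (g*x))"
    proof (rule antisym)
      show "(SUP n. ennreal (exp (g*x) * indicator {..real n} x)) \<le> ennreal (exp (g*x))"
        by (rule SUP_least) (auto simp: indicator_def)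
      show "ennreal (exp (g*x)) \<le> (SUP n. ennreal (exp (g*x) * indicator {..real n} x))"
        by (rule SUP_upper2[of n]) (use n in auto)
    qed
  qed
  also have "\<dots> = ennreal phi" using phi unfolding mgf_def by simp
  finally have SUPm: "(SUP n. m n) = ennreal phi" .
  have "ennreal (c/2) < ennreal phi" using c cpos by (subst ennreal_less_iff) auto
  then obtain n where n: "ennreal (c/2) < m n" unfolding SUPm[symmetric] by (auto simp: less_SUP_iff)
  define A where "A = real n"
  define x1 where "x1 = max x0 (2*A+1)"
  have A0: "0 \<le> A" unfolding A_def by simp
  have x1: "x1 \<ge> x0" "x1 > 2*A" "x1 \<ge> 0" unfolding x1_def using A0 by auto
  define V where "V r = ennreal ((exp (g*r) - exp (g*x1)) / g)" for r
  have Vm[measurable]: "V \<in> borel_measurable borel" unfolding V_def by measurable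
  define D where "D = (\<integral>\<^sup>+s. V s \<partial>F)"
  have tonF: "(\<integral>\<^sup>+u. ennreal (exp (g*u) * indicator {x1..} u) * emeasure F {u<..} \<partial>lborel) = D"
    unfolding D_def V_def
    by (subst tail_tonelli[OF sF finF]) (auto simp: exp_weight[OF g])
  have tonS: "(\<integral>\<^sup>+u. ennreal (exp (g*u) * indicator {x1..} u) * emeasure (F \<star> F) {u<..} \<partial>lborel)
      = (\<integral>\<^sup>+s. V s \<partial>(F \<star> F))"
    unfolding V_def
    by (subst tail_tonelli[OF sS finS]) (auto simp: exp_weight[OF g])
  have up: "(\<integral>\<^sup>+s. V s \<partial>(F \<star> F)) \<le> ennreal c * D"
  proof -
    have "(\<integral>\<^sup>+u. ennreal (exp (g*u) * indicator {x1..} u) * emeasure (F \<star> F) {u<..} \<partial>lborel)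
       \<le> (\<integral>\<^sup>+u. ennreal c * (ennreal (exp (g*u) * indicator {x1..} u) * emeasure F {u<..}) \<partial>lborel)"
    proof (rule nn_integral_mono)
      fix u :: real
      show "ennreal (exp (g*u) * indicator {x1..} u) * emeasure (F \<star> F) {u<..}
         \<le> ennreal c * (ennreal (exp (g*u) * indicator {x1..} u) * emeasure F {u<..})"
      proof (cases "x1 \<le> u")
        case True
        then have "tail (F \<star> F) u \<le> c * tail F u" using ev[of u] x1 by simp
        then have "emeasure (F \<star> F) {u<..} \<le> ennreal c * emeasure F {u<..}"
          unfolding tail_emeasure[OF finS] tail_emeasure[OF finF]
          using cpos by (simp add: ennreal_mult[symmetric] tail_def)
        then show ?thesis
          by (metis (no_types, lifting) mult.left_commute mult_left_mono zero_le)
      qed (simp add: indicator_def)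
    qed
    also have "\<dots> = ennreal c * D"
      by (subst nn_integral_cmult) (auto simp: tonF)
    finally show ?thesis using tonS by simp
  qed
  have lowp: "V (x + y) \<ge> ennreal (exp (g*x) * indicator {..A} x) * V y + ennreal (exp (g*y) * indicator {..A} y) * V x"
    if "0 \<le> x" "0 \<le> y" for x y
  proof -
    have V0: "V r = 0" if "r \<le> A" for r
    proof -
      have "exp (g*r) \<le> exp (g*x1)" using that x1 g A0 by simp
      then show ?thesis unfolding V_def using g by (simp add: ennreal_eq_0_iff divide_nonpos_pos)
    qed
    have key: "ennreal (exp (g*a)) * V b \<le> V (a + b)" if "0 \<le> a" for a b
    proof -
      have "ennreal (exp (g*a)) * V b = ennreal (exp (g*a) * ((exp (g*b) - exp (g*x1)) / g))"
        unfolding V_def by (subst ennreal_mult'[symmetric]) auto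
      also have "\<dots> \<le> V (a + b)" unfolding V_def
      proof (rule ennreal_leI)
        have "exp (g*x1) \<le> exp (g*a) * exp (g*x1)" using that g by simp
        then have "exp (g*a) * (exp (g*b) - exp (g*x1)) \<le> exp (g*(a+b)) - exp (g*x1)"
          by (simp add: algebra_simps exp_add[symmetric])
        then show "exp (g*a) * ((exp (g*b) - exp (g*x1)) / g) \<le> (exp (g*(a+b)) - exp (g*x1)) / g"
          using g by (simp add: divide_right_mono)
      qed
      finally show ?thesis .
    qed
    consider "x \<le> A" "y \<le> A" | "x \<le> A" "\<not> y \<le> A" | "\<not> x \<le> A" "y \<le> A" | "\<not> x \<le> A" "\<not> y \<le> A" by blast
    then show ?thesis
    proof cases
      case 1 then show ?thesis by (simp add: V0)
    next
      case 2 then show ?thesis using key[of x y] that V0 by (simp add: indicator_def)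
    next
      case 3 then show ?thesis using key[of y x] that V0 by (simp add: indicator_def add.commute)
    qed (simp add: indicator_def)
  qed
  have low: "ennreal 2 * (m n * D) \<le> (\<integral>\<^sup>+s. V s \<partial>(F \<star> F))"
  proof -
    have "(\<integral>\<^sup>+s. V s \<partial>(F \<star> F)) = (\<integral>\<^sup>+x. \<integral>\<^sup>+y. V (x + y) \<partial>F \<partial>F)"
      by (rule conv_nn[OF PS sF Vm])
    also have "\<dots> \<ge> (\<integral>\<^sup>+x. \<integral>\<^sup>+y. ennreal (exp (g*x) * indicator {..A} x) * V y + ennreal (exp (g*y) * indicator {..A} y) * V x \<partial>F \<partial>F)"
    proof (rule nn_integral_mono_AE)
      show "AE x in F. (\<integral>\<^sup>+y. ennreal (exp (g*x) * indicator {..A} x) * V y + ennreal (exp (g*y) * indicator {..A} y) * V x \<partial>F) \<le> (\<integral>\<^sup>+y. V (x + y) \<partial>F)"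
        using AE0
      proof eventually_elim
        case (elim x)
        show ?case
          by (rule nn_integral_mono_AE) (rule eventually_mono[OF AE0 lowp[OF elim]])
      qed
    qed
    also have "(\<integral>\<^sup>+x. \<integral>\<^sup>+y. ennreal (exp (g*x) * indicator {..A} x) * V y + ennreal (exp (g*y) * indicator {..A} y) * V x \<partial>F \<partial>F)
        = (\<integral>\<^sup>+x. ennreal (exp (g*x) * indicator {..A} x) * D + m n * V x \<partial>F)"
    proof (rule nn_integral_cong)
      fix x
      show "(\<integral>\<^sup>+y. ennreal (exp (g*x) * indicator {..A} x) * V y + ennreal (exp (g*y) * indicator {..A} y) * V x \<partial>F)
          = ennreal (exp (g*x) * indicator {..A} x) * D + m n * V x"
      proof -
        have "(\<integral>\<^sup>+y. ennreal (exp (g*x) * indicator {..A} x) * V y + ennreal (exp (g*y) * indicator {..A} y) * V x \<partial>F)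
          = (\<integral>\<^sup>+y. ennreal (exp (g*x) * indicator {..A} x) * V y \<partial>F) + (\<integral>\<^sup>+y. ennreal (exp (g*y) * indicator {..A} y) * V x \<partial>F)"
          by (rule nn_integral_add) auto
        also have "(\<integral>\<^sup>+y. ennreal (exp (g*x) * indicator {..A} x) * V y \<partial>F) = ennreal (exp (g*x) * indicator {..A} x) * D"
          unfolding D_def by (rule nn_integral_cmult) simp
        also have "(\<integral>\<^sup>+y. ennreal (exp (g*y) * indicator {..A} y) * V x \<partial>F) = m n * V x"
          unfolding m_def A_def by (rule nn_integral_multc) simp
        finally show ?thesis .
      qed
    qed
    also have "\<dots> = m n * D + m n * D"
    proof -
      have "(\<integral>\<^sup>+x. ennreal (exp (g*x) * indicator {..A} x) * D + m n * V x \<partial>F)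
          = (\<integral>\<^sup>+x. ennreal (exp (g*x) * indicator {..A} x) * D \<partial>F) + (\<integral>\<^sup>+x. m n * V x \<partial>F)"
        by (rule nn_integral_add) auto
      also have "(\<integral>\<^sup>+x. ennreal (exp (g*x) * indicator {..A} x) * D \<partial>F) = m n * D"
        unfolding m_def A_def by (rule nn_integral_multc) simp
      also have "(\<integral>\<^sup>+x. m n * V x \<partial>F) = m n * D"
        unfolding D_def by (rule nn_integral_cmult) simp
      finally show ?thesis .
    qed
    finally have "m n * D + m n * D \<le> (\<integral>\<^sup>+s. V s \<partial>(F \<star> F))" .
    moreover have "ennreal 2 * (m n * D) = m n * D + m n * D"
      by (subst ennreal_numeral) (rule mult_2)
    ultimately show ?thesis by simp
  qed
  have Dfin: "D < top"
  proof -
    have "D \<le> (\<integral>\<^sup>+s. ennreal (exp (g* s)) * ennreal (1/g) \<partial>F)"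
      unfolding D_def V_def
    proof (rule nn_integral_mono)
      fix s :: real
      have "(exp (g* s) - exp (g*x1)) / g \<le> exp (g* s) * (1/g)" using g by (simp add: divide_right_mono)
      then show "ennreal ((exp (g* s) - exp (g*x1)) / g) \<le> ennreal (exp (g* s)) * ennreal (1/g)"
        by (subst ennreal_mult[symmetric]) (use g in \<open>auto intro: ennreal_leI\<close>)
    qed
    also have "\<dots> = mgf F g * ennreal (1/g)"
      unfolding mgf_def by (rule nn_integral_multc) simp
    also have "\<dots> < top" using phi by (simp add: ennreal_mult_less_top)
    finally show ?thesis .
  qed
  have Dpos: "0 < D"
  proof -
    define k where "k = (exp (g*(x1+1)) - exp (g*x1)) / g"
    have k: "0 < k" unfolding k_def using g by (simp add: divide_pos_pos)
    have "(\<integral>\<^sup>+s. ennreal k * indicator {x1+1<..} s \<partial>F) \<le> D"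
      unfolding D_def V_def
    proof (rule nn_integral_mono)
      fix s :: real
      show "ennreal k * indicator {x1+1<..} s \<le> ennreal ((exp (g* s) - exp (g*x1)) / g)"
      proof (cases "x1 + 1 < s")
        case True
        then have "exp (g*(x1+1)) \<le> exp (g* s)" using g by simp
        then have "k \<le> (exp (g* s) - exp (g*x1)) / g" unfolding k_def using g by (simp add: divide_right_mono)
        then show ?thesis using True by (simp add: ennreal_leI)
      qed simp
    qed
    moreover have "(\<integral>\<^sup>+s. ennreal k * indicator {x1+1<..} s \<partial>F) = ennreal k * emeasure F {x1+1<..}"
      using sF by (subst nn_integral_cmult_indicator) auto
    moreover have "0 < ennreal k * emeasure F {x1+1<..}"
      using k tpos[of "x1+1"] unfolding tail_emeasure[OF finF] by (simp add: ennreal_mult[symmetric])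
    ultimately show ?thesis by order
  qed
  have "ennreal (c/2) * D < m n * D"
    by (rule ennreal_mult_strict_right_mono[OF n Dpos Dfin])
  then have "ennreal 2 * (ennreal (c/2) * D) < ennreal 2 * (m n * D)"
    by (intro ennreal_mult_strict_left_mono) auto
  also have "ennreal 2 * (ennreal (c/2) * D) = ennreal c * D"
  proof -
    have "ennreal 2 * ennreal (c/2) = ennreal c" using cpos by (subst ennreal_mult[symmetric]) auto
    then show ?thesis by (simp add: mult.assoc[symmetric])
  qed
  finally have "ennreal c * D < ennreal c * D" using low up by order
  then show False by simp
qed

lemma rho_facts:
  shows "0 \<le> rho T x"
    and "0 \<le> h \<Longrightarrow> rho (T+h) x \<le> rho T x + h"
    and "T \<le> T' \<Longrightarrow> rho T x \<le> rho T' x"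
    and "0 \<le> T \<Longrightarrow> rho T x \<le> T"
    and "0 \<le> x \<Longrightarrow> rho T x \<le> x"
    and "0 \<le> T \<Longrightarrow> rho T (x + y) \<le> rho T x + rho T y"
    and "rho 0 x = 0"
    and "0 \<le> x \<Longrightarrow> x \<le> T \<Longrightarrow> rho T x = x"
  unfolding rho_def by auto

lemma div_g:
  assumes g: "0 < (g::real)" and f0: "\<And>s. 0 \<le> f s" and fm: "f \<in> borel_measurable M"
  shows "(\<integral>\<^sup>+s. ennreal (f s / g) \<partial>M) = (\<integral>\<^sup>+s. ennreal (f s) \<partial>M) * ennreal (1/g)"
proof -
  have "(\<integral>\<^sup>+s. ennreal (f s / g) \<partial>M) = (\<integral>\<^sup>+s. ennreal (f s) * ennreal (1/g) \<partial>M)"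
    using f0 g by (intro nn_integral_cong) (simp add: ennreal_mult[symmetric] divide_inverse)
  also have "\<dots> = (\<integral>\<^sup>+s. ennreal (f s) \<partial>M) * ennreal (1/g)"
    using fm by (intro nn_integral_multc) simp
  finally show ?thesis .
qed

lemma part_liminf:
  fixes F :: "real measure" and g phi c x0 :: real
  assumes PS: "prob_space F" and sF: "sets F = sets borel"
    and AE0: "AE x in F. 0 \<le> x"
    and g: "g > 0" and phi: "mgf F g = ennreal phi" and phi0: "0 \<le> phi"
    and maxi: "\<And>l. l > 0 \<Longrightarrow> mgf F (g + l) = top"
    and c: "2 * phi < c" and x00: "0 \<le> x0"
    and ev: "\<And>u. u \<ge> x0 \<Longrightarrow> c * tail F u < tail (F \<star> F) u"
  shows False
proof -
  interpret prob_space F by fact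
  have [measurable_cong]: "sets F = sets borel" by fact
  have finF: "finite_measure F" by (rule finite_measure_axioms)
  have finS: "finite_measure (F \<star> F)"
    using finF sF by (intro convolution_finite) auto
  have sS: "sets (F \<star> F) = sets borel" by simp
  have [measurable]: "(\<lambda>u. emeasure F {u<..}) \<in> borel_measurable borel"
    by (rule tail_meas[OF finF sF])
  have [measurable]: "(\<lambda>u. emeasure (F \<star> F) {u<..}) \<in> borel_measurable borel"
    by (rule tail_meas[OF finS sS])
  define d where "d = c - 2 * phi"
  have d: "d > 0" using c unfolding d_def by simp
  have cpos: "c > 0" using c phi0 by simp
  define eta where "eta = d^2 / (32 * c * exp (g * x0))"
  have eta: "eta > 0" unfolding eta_def using d cpos by simp
  define l where "l = ln (1 + eta) / (x0 + 1)"
  have l: "l > 0" unfolding l_def using eta x00 by simp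
  have lx0: "exp (l * x0) \<le> 1 + eta"
  proof -
    have "l * x0 \<le> ln (1 + eta)"
      unfolding l_def using eta x00 by (simp add: field_simps mult_left_mono)
    then have "exp (l * x0) \<le> exp (ln (1 + eta))" by simp
    then show ?thesis using eta by simp
  qed
  have delta: "c * (exp (g * x0) * (exp (l * x0) - 1)) < d^2 / 16"
  proof -
    have "c * (exp (g * x0) * (exp (l * x0) - 1)) \<le> c * (exp (g * x0) * eta)"
      using lx0 cpos by (intro mult_left_mono) auto
    also have "\<dots> = d^2 / 32" unfolding eta_def using cpos by (simp add: field_simps)
    also have "\<dots> < d^2 / 16" using d by simp
    finally show ?thesis .
  qed
  define lo where "lo = phi + d/4"
  define hi where "hi = phi + 3*d/4"
  have lo: "lo > 0" "lo > phi" unfolding lo_def using d phi0 by auto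
  define h where "h = ln (hi / lo) / l"
  have h: "h > 0" unfolding h_def using l lo d by (simp add: hi_def lo_def)
  have elh: "exp (l * h) = hi / lo" unfolding h_def using l lo d by (simp add: hi_def lo_def)
  define H where "H T s = exp (g * s + l * rho T s)" for T s
  have Hm[measurable]: "H T \<in> borel_measurable borel" for T unfolding H_def rho_def by measurable
  define AT where "AT T = (\<integral>\<^sup>+x. ennreal (H T x) \<partial>F)" for T
  have AT0: "AT 0 = ennreal phi"
    unfolding AT_def H_def using phi by (simp add: rho_facts mgf_def)
  have ATstep: "AT (T + h) \<le> ennreal (exp (l * h)) * AT T" for T
  proof -
    have "AT (T + h) \<le> (\<integral>\<^sup>+x. ennreal (exp (l * h)) * ennreal (H T x) \<partial>F)"
      unfolding AT_def
    proof (rule nn_integral_mono)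
      fix x
      have "g * x + l * rho (T + h) x \<le> l * h + (g * x + l * rho T x)"
      proof -
        have "l * rho (T + h) x \<le> l * (rho T x + h)"
          using rho_facts(2)[of h T x] h l by (intro mult_left_mono) auto
        then show ?thesis by (simp add: algebra_simps)
      qed
      then show "ennreal (H (T + h) x) \<le> ennreal (exp (l * h)) * ennreal (H T x)"
        unfolding H_def by (subst ennreal_mult[symmetric]) (auto simp: exp_add[symmetric])
    qed
    also have "\<dots> = ennreal (exp (l * h)) * AT T"
      unfolding AT_def by (rule nn_integral_cmult) simp
    finally show ?thesis .
  qed
  have ATfin: "AT T < top" if "0 \<le> T" for T
  proof -
    have "AT T \<le> (\<integral>\<^sup>+x. ennreal (exp (l * T)) * ennreal (exp (g * x)) \<partial>F)"
      unfolding AT_def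
    proof (rule nn_integral_mono)
      fix x
      have "g * x + l * rho T x \<le> l * T + g * x"
      proof -
        have "l * rho T x \<le> l * T"
          using rho_facts(4)[OF that, of x] l by (intro mult_left_mono) auto
        then show ?thesis by simp
      qed
      then show "ennreal (H T x) \<le> ennreal (exp (l * T)) * ennreal (exp (g * x))"
        unfolding H_def by (subst ennreal_mult[symmetric]) (auto simp: exp_add[symmetric])
    qed
    also have "\<dots> = ennreal (exp (l * T)) * mgf F g"
      unfolding mgf_def by (rule nn_integral_cmult) simp
    also have "\<dots> < top" using phi by (simp add: ennreal_mult_less_top)
    finally show ?thesis .
  qed
  have ATunb: "\<exists>k::nat. ennreal lo \<le> AT (real k * h)"
  proof -
    have "top = mgf F (g + l)" using maxi[OF l] by simp
    also have "\<dots> \<le> (\<integral>\<^sup>+x. (SUP k. ennreal (H (real k * h) x)) \<partial>F)"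
      unfolding mgf_def
    proof (rule nn_integral_mono_AE)
      show "AE x in F. ennreal (exp ((g + l) * x)) \<le> (SUP k. ennreal (H (real k * h) x))"
        using AE0
      proof eventually_elim
        case (elim x)
        obtain k :: nat where k: "x / h \<le> real k" using real_arch_simple by blast
        then have "x \<le> real k * h" using h by (simp add: field_simps)
        then have "rho (real k * h) x = x" using elim by (simp add: rho_facts)
        then have "ennreal (exp ((g + l) * x)) = ennreal (H (real k * h) x)"
          unfolding H_def by (simp add: algebra_simps)
        then show ?case by (intro SUP_upper2[of k]) auto
      qed
    qed
    also have "\<dots> = (SUP k. AT (real k * h))"
      unfolding AT_def
    proof (rule nn_integral_monotone_convergence_SUP)
      show "incseq (\<lambda>k x. ennreal (H (real k * h) x))"
      proof (intro incseq_SucI le_funI)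
        fix k x
        have "rho (real k * h) x \<le> rho (real (Suc k) * h) x"
          using h by (intro rho_facts(3)) (simp add: field_simps)
        then show "ennreal (H (real k * h) x) \<le> ennreal (H (real (Suc k) * h) x)"
          unfolding H_def using l by (auto intro!: ennreal_leI mult_left_mono)
      qed
    qed simp
    finally have S: "(SUP k. AT (real k * h)) = top" by (simp add: top_unique)
    have "ennreal lo < (SUP k. AT (real k * h))" unfolding S by simp
    then obtain k where "ennreal lo < AT (real k * h)" unfolding less_SUP_iff by blast
    then show ?thesis by (auto intro: less_imp_le)
  qed
  define k where "k = (LEAST k::nat. ennreal lo \<le> AT (real k * h))"
  have k1: "ennreal lo \<le> AT (real k * h)" unfolding k_def using ATunb by (rule LeastI_ex)
  have k0: "k \<noteq> 0"
  proof
    assume "k = 0"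
    then have "ennreal lo \<le> ennreal phi" using k1 AT0 by simp
    then show False using lo phi0 by (simp add: ennreal_le_iff)
  qed
  have k2: "\<not> ennreal lo \<le> AT (real (k - 1) * h)"
    unfolding k_def by (rule not_less_Least) (use k0 k_def in simp)
  define T where "T = real k * h"
  have T0: "0 \<le> T" unfolding T_def using h by simp
  have "AT T \<le> ennreal (exp (l * h)) * AT (real (k - 1) * h)"
  proof -
    have "T = real (k - 1) * h + h" unfolding T_def using k0 by (simp add: algebra_simps of_nat_diff)
    then show ?thesis using ATstep[of "real (k - 1) * h"] by simp
  qed
  also have "\<dots> \<le> ennreal (exp (l * h)) * ennreal lo"
    using k2 by (intro mult_left_mono) auto
  also have "\<dots> = ennreal hi"
  proof -
    have "hi / lo \<ge> 0" using lo d phi0 by (simp add: hi_def)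
    then have "ennreal (hi / lo) * ennreal lo = ennreal (hi / lo * lo)" using lo by (intro ennreal_mult[symmetric]) auto
    then show ?thesis using elh lo by simp
  qed
  finally have ATT: "ennreal lo \<le> AT T" "AT T \<le> ennreal hi" using k1 unfolding T_def by auto
  define A where "A = enn2real (AT T)"
  have AT_eq: "AT T = ennreal A" unfolding A_def using ATfin[OF T0] by simp
  have A0: "0 \<le> A" unfolding A_def by simp
  have hi0: "0 \<le> hi" unfolding hi_def using d phi0 by simp
  have A: "lo \<le> A" "A \<le> hi" using ATT lo A0 hi0 unfolding AT_eq by (simp_all add: ennreal_le_iff)
  define w where "w u = om g l T u * indicator {0..} u" for u
  have wm[measurable]: "w \<in> borel_measurable borel" unfolding w_def by measurable
  define Wf where "Wf s = ennreal ((H T s - exp (g * s)) / g)" for s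
  have Wfm[measurable]: "Wf \<in> borel_measurable borel" unfolding Wf_def by measurable
  have Wf_eq: "(\<integral>\<^sup>+u. ennreal (w u) * indicator {..<s} u \<partial>lborel) = Wf s" for s
    unfolding w_def Wf_def H_def by (rule om_weight[OF g l T0])
  have tonF: "(\<integral>\<^sup>+u. ennreal (w u) * emeasure F {u<..} \<partial>lborel) = (\<integral>\<^sup>+s. Wf s \<partial>F)"
    by (subst tail_tonelli[OF sF finF wm]) (simp add: Wf_eq)
  have tonS: "(\<integral>\<^sup>+u. ennreal (w u) * emeasure (F \<star> F) {u<..} \<partial>lborel) = (\<integral>\<^sup>+s. Wf s \<partial>(F \<star> F))"
    by (subst tail_tonelli[OF sS finS wm]) (simp add: Wf_eq)
  have fact1: "ennreal c * (\<integral>\<^sup>+s. Wf s \<partial>F) \<le> ennreal c * Wf x0 + (\<integral>\<^sup>+s. Wf s \<partial>(F \<star> F))"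
  proof -
    have "ennreal c * (\<integral>\<^sup>+s. Wf s \<partial>F) = (\<integral>\<^sup>+u. ennreal c * (ennreal (w u) * emeasure F {u<..}) \<partial>lborel)"
      unfolding tonF[symmetric] by (rule nn_integral_cmult[symmetric]) simp
    also have "\<dots> \<le> (\<integral>\<^sup>+u. ennreal c * (ennreal (w u) * indicator {..<x0} u) + ennreal (w u) * emeasure (F \<star> F) {u<..} \<partial>lborel)"
    proof (rule nn_integral_mono)
      fix u :: real
      show "ennreal c * (ennreal (w u) * emeasure F {u<..}) \<le> ennreal c * (ennreal (w u) * indicator {..<x0} u) + ennreal (w u) * emeasure (F \<star> F) {u<..}"
      proof (cases "u < x0")
        case True
        have "emeasure F {u<..} \<le> 1" by (rule emeasure_le_1)
        then have "ennreal (w u) * emeasure F {u<..} \<le> ennreal (w u) * indicator {..<x0} u"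
          using True by (simp add: indicator_def mult_left_le)
        then have "ennreal c * (ennreal (w u) * emeasure F {u<..}) \<le> ennreal c * (ennreal (w u) * indicator {..<x0} u)"
          by (rule mult_left_mono) simp
        then show ?thesis by (rule add_increasing2[OF zero_le])
      next
        case False
        then have "c * tail F u \<le> tail (F \<star> F) u" using ev[of u] by simp
        then have "ennreal c * emeasure F {u<..} \<le> emeasure (F \<star> F) {u<..}"
          unfolding tail_emeasure[OF finS] tail_emeasure[OF finF]
          using cpos by (simp add: ennreal_mult[symmetric] tail_def)
        then have "ennreal c * (ennreal (w u) * emeasure F {u<..}) \<le> ennreal (w u) * emeasure (F \<star> F) {u<..}"
          by (metis (no_types, lifting) mult.left_commute mult_left_mono zero_le)
        then show ?thesis by (rule add_increasing[OF zero_le])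
      qed
    qed
    also have "\<dots> = (\<integral>\<^sup>+u. ennreal c * (ennreal (w u) * indicator {..<x0} u) \<partial>lborel) + (\<integral>\<^sup>+u. ennreal (w u) * emeasure (F \<star> F) {u<..} \<partial>lborel)"
      by (rule nn_integral_add) auto
    also have "(\<integral>\<^sup>+u. ennreal c * (ennreal (w u) * indicator {..<x0} u) \<partial>lborel) = ennreal c * Wf x0"
      by (subst nn_integral_cmult) (auto simp: Wf_eq)
    finally show ?thesis unfolding tonS .
  qed
  have HgeE: "exp (g * s) \<le> H T s" for s
    unfolding H_def using l rho_facts(1)[of T s] by simp
  have pw: "Wf s + ennreal (exp (g * s) / g) = ennreal (H T s / g)" for s
  proof -
    have "0 \<le> (H T s - exp (g * s)) / g" using HgeE[of s] g by simp
    then have "Wf s + ennreal (exp (g * s) / g) = ennreal ((H T s - exp (g * s)) / g + exp (g * s) / g)"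
      unfolding Wf_def using g by (subst ennreal_plus) auto
    also have "(H T s - exp (g * s)) / g + exp (g * s) / g = H T s / g" by (simp add: diff_divide_distrib)
    finally show ?thesis .
  qed
  have Hpos: "0 \<le> H T s" for s unfolding H_def by simp
  have E1: "(\<integral>\<^sup>+s. Wf s \<partial>F) + ennreal phi * ennreal (1/g) = ennreal A * ennreal (1/g)"
  proof -
    have "(\<integral>\<^sup>+s. Wf s \<partial>F) + ennreal phi * ennreal (1/g) = (\<integral>\<^sup>+s. Wf s \<partial>F) + (\<integral>\<^sup>+s. ennreal (exp (g * s) / g) \<partial>F)"
      using phi by (subst div_g[OF g]) (auto simp: mgf_def)
    also have "\<dots> = (\<integral>\<^sup>+s. Wf s + ennreal (exp (g * s) / g) \<partial>F)"
      by (rule nn_integral_add[symmetric]) auto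
    also have "\<dots> = (\<integral>\<^sup>+s. ennreal (H T s / g) \<partial>F)" by (simp add: pw)
    also have "\<dots> = ennreal A * ennreal (1/g)"
      using AT_eq by (subst div_g[OF g Hpos]) (auto simp: AT_def)
    finally show ?thesis .
  qed
  have convE: "(\<integral>\<^sup>+s. ennreal (exp (g * s)) \<partial>(F \<star> F)) = ennreal phi * ennreal phi"
  proof -
    have "(\<integral>\<^sup>+s. ennreal (exp (g * s)) \<partial>(F \<star> F)) = (\<integral>\<^sup>+x. \<integral>\<^sup>+y. ennreal (exp (g * (x + y))) \<partial>F \<partial>F)"
      by (rule conv_nn[OF PS sF]) simp
    also have "\<dots> = (\<integral>\<^sup>+x. ennreal (exp (g * x)) * (\<integral>\<^sup>+y. ennreal (exp (g * y)) \<partial>F) \<partial>F)"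
    proof (rule nn_integral_cong)
      fix x
      have "(\<integral>\<^sup>+y. ennreal (exp (g * (x + y))) \<partial>F) = (\<integral>\<^sup>+y. ennreal (exp (g * x)) * ennreal (exp (g * y)) \<partial>F)"
        by (intro nn_integral_cong) (simp add: ennreal_mult[symmetric] distrib_left exp_add)
      also have "\<dots> = ennreal (exp (g * x)) * (\<integral>\<^sup>+y. ennreal (exp (g * y)) \<partial>F)"
        by (rule nn_integral_cmult) simp
      finally show "(\<integral>\<^sup>+y. ennreal (exp (g * (x + y))) \<partial>F) = ennreal (exp (g * x)) * (\<integral>\<^sup>+y. ennreal (exp (g * y)) \<partial>F)" .
    qed
    also have "\<dots> = (\<integral>\<^sup>+x. ennreal (exp (g * x)) \<partial>F) * (\<integral>\<^sup>+y. ennreal (exp (g * y)) \<partial>F)"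
      by (rule nn_integral_multc) simp
    finally show ?thesis using phi by (simp add: mgf_def)
  qed
  have convH: "(\<integral>\<^sup>+s. ennreal (H T s) \<partial>(F \<star> F)) \<le> ennreal A * ennreal A"
  proof -
    have "(\<integral>\<^sup>+s. ennreal (H T s) \<partial>(F \<star> F)) = (\<integral>\<^sup>+x. \<integral>\<^sup>+y. ennreal (H T (x + y)) \<partial>F \<partial>F)"
      by (rule conv_nn[OF PS sF]) simp
    also have "\<dots> \<le> (\<integral>\<^sup>+x. ennreal (H T x) * (\<integral>\<^sup>+y. ennreal (H T y) \<partial>F) \<partial>F)"
    proof (rule nn_integral_mono)
      fix x
      have "(\<integral>\<^sup>+y. ennreal (H T (x + y)) \<partial>F) \<le> (\<integral>\<^sup>+y. ennreal (H T x) * ennreal (H T y) \<partial>F)"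
      proof (rule nn_integral_mono)
        fix y
        have "g * (x + y) + l * rho T (x + y) \<le> (g * x + l * rho T x) + (g * y + l * rho T y)"
        proof -
          have "l * rho T (x + y) \<le> l * (rho T x + rho T y)"
            using rho_facts(6)[OF T0, of x y] l by (intro mult_left_mono) auto
          then show ?thesis by (simp add: algebra_simps)
        qed
        then have "H T (x + y) \<le> H T x * H T y" unfolding H_def by (simp add: exp_add[symmetric])
        then show "ennreal (H T (x + y)) \<le> ennreal (H T x) * ennreal (H T y)"
          using Hpos by (subst ennreal_mult[symmetric]) (auto intro: ennreal_leI)
      qed
      also have "\<dots> = ennreal (H T x) * (\<integral>\<^sup>+y. ennreal (H T y) \<partial>F)"
        by (rule nn_integral_cmult) simp
      finally show "(\<integral>\<^sup>+y. ennreal (H T (x + y)) \<partial>F) \<le> ennreal (H T x) * (\<integral>\<^sup>+y. ennreal (H T y) \<partial>F)" .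
    qed
    also have "\<dots> = (\<integral>\<^sup>+x. ennreal (H T x) \<partial>F) * (\<integral>\<^sup>+y. ennreal (H T y) \<partial>F)"
      by (rule nn_integral_multc) simp
    finally show ?thesis using AT_eq by (simp add: AT_def)
  qed
  have E2: "(\<integral>\<^sup>+s. Wf s \<partial>(F \<star> F)) + ennreal phi * ennreal phi * ennreal (1/g) \<le> ennreal A * ennreal A * ennreal (1/g)"
  proof -
    have "(\<integral>\<^sup>+s. Wf s \<partial>(F \<star> F)) + ennreal phi * ennreal phi * ennreal (1/g)
        = (\<integral>\<^sup>+s. Wf s \<partial>(F \<star> F)) + (\<integral>\<^sup>+s. ennreal (exp (g * s) / g) \<partial>(F \<star> F))"
      by (subst div_g[OF g]) (auto simp: convE)
    also have "\<dots> = (\<integral>\<^sup>+s. Wf s + ennreal (exp (g * s) / g) \<partial>(F \<star> F))"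
      by (rule nn_integral_add[symmetric]) auto
    also have "\<dots> = (\<integral>\<^sup>+s. ennreal (H T s / g) \<partial>(F \<star> F))" by (simp add: pw)
    also have "\<dots> = (\<integral>\<^sup>+s. ennreal (H T s) \<partial>(F \<star> F)) * ennreal (1/g)"
      by (rule div_g[OF g Hpos]) simp
    also have "\<dots> \<le> ennreal A * ennreal A * ennreal (1/g)"
      using convH by (rule mult_right_mono) simp
    finally show ?thesis .
  qed
  define I1 where "I1 = (\<integral>\<^sup>+s. Wf s \<partial>F)"
  define I2 where "I2 = (\<integral>\<^sup>+s. Wf s \<partial>(F \<star> F))"
  have ig: "0 \<le> 1/g" using g by simp
  have r1: "ennreal phi * ennreal (1/g) = ennreal (phi/g)" using phi0 ig by (simp add: ennreal_mult[symmetric])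
  have r2: "ennreal A * ennreal (1/g) = ennreal (A/g)" using A0 ig by (simp add: ennreal_mult[symmetric])
  have r3: "ennreal phi * ennreal phi * ennreal (1/g) = ennreal (phi*phi/g)" using phi0 ig by (simp add: ennreal_mult[symmetric])
  have r4: "ennreal A * ennreal A * ennreal (1/g) = ennreal (A*A/g)" using A0 ig by (simp add: ennreal_mult[symmetric])
  have E1': "I1 + ennreal (phi/g) = ennreal (A/g)" using E1 unfolding I1_def r1 r2 .
  have E2': "I2 + ennreal (phi*phi/g) \<le> ennreal (A*A/g)" using E2 unfolding I2_def r3 r4 .
  have "I1 \<le> I1 + ennreal (phi/g)" by (rule add_increasing2[OF zero_le order_refl])
  then have "I1 < top" unfolding E1' using ennreal_less_top le_less_trans by blast
  then obtain p1 where p1: "I1 = ennreal p1" "0 \<le> p1" by (cases I1) auto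
  have "I2 \<le> I2 + ennreal (phi*phi/g)" by (rule add_increasing2[OF zero_le order_refl])
  then have "I2 < top" using E2' ennreal_less_top order.trans le_less_trans by metis
  then obtain p2 where p2: "I2 = ennreal p2" "0 \<le> p2" by (cases I2) auto
  define wx0 where "wx0 = (H T x0 - exp (g * x0)) / g"
  have wx00: "0 \<le> wx0" unfolding wx0_def using HgeE[of x0] g by simp
  have Wx: "Wf x0 = ennreal wx0" unfolding Wf_def wx0_def ..
  have phig: "0 \<le> phi/g" "0 \<le> phi*phi/g" using phi0 g by auto
  have q1: "p1 + phi/g = A/g"
    using E1' p1 phig A0 g by (simp del: ennreal_plus add: ennreal_plus[symmetric])
  have q2: "p2 + phi*phi/g \<le> A*A/g"
    using E2' p2 phig A0 g by (simp del: ennreal_plus add: ennreal_plus[symmetric] ennreal_le_iff)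
  have q3: "c * p1 \<le> c * wx0 + p2"
  proof -
    have "ennreal (c * p1) \<le> ennreal (c * wx0 + p2)"
      using fact1 unfolding I1_def[symmetric] I2_def[symmetric] p1 p2 Wx
      using cpos p1 p2 wx00 by (simp del: ennreal_plus add: ennreal_plus[symmetric] ennreal_mult[symmetric])
    moreover have "ennreal (c*wx0) + ennreal p2 = ennreal (c*wx0 + p2)"
      using cpos wx00 p2 by (intro ennreal_plus[symmetric]) auto
    ultimately have "ennreal (c * p1) \<le> ennreal (c*wx0 + p2)" by simp
    moreover have "0 \<le> c*wx0 + p2" using cpos wx00 p2 by simp
    ultimately show ?thesis by (simp add: ennreal_le_iff)
  qed
  have gw: "g * wx0 \<le> exp (g * x0) * (exp (l * x0) - 1)"
  proof -
    have "rho T x0 \<le> x0" using x00 by (rule rho_facts(5))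
    then have "l * rho T x0 \<le> l * x0" using l by (intro mult_left_mono) auto
    then have "H T x0 \<le> exp (g * x0) * exp (l * x0)" unfolding H_def by (simp add: exp_add[symmetric])
    moreover have "g * wx0 = H T x0 - exp (g * x0)" unfolding wx0_def using g by simp
    ultimately show ?thesis by (simp add: right_diff_distrib)
  qed
  have main: "c * (A - phi) \<le> c * (g * wx0) + (A*A - phi*phi)"
  proof -
    have a: "c * p1 * g \<le> (c * wx0 + p2) * g" using q3 g by (intro mult_right_mono) auto
    have b: "p1 * g = A - phi" using q1 g by (simp add: field_simps)
    have cc: "p2 * g \<le> A*A - phi*phi"
    proof -
      have "(p2 + phi*phi/g) * g \<le> (A*A/g) * g" using q2 g by (intro mult_right_mono) auto
      moreover have "(p2 + phi*phi/g) * g = p2 * g + phi*phi" using g by (simp add: distrib_right)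
      moreover have "(A*A/g) * g = A*A" using g by simp
      ultimately show ?thesis by linarith
    qed
    have e1: "c * p1 * g = c * (A - phi)" using b by (simp add: mult.assoc)
    have e2: "(c * wx0 + p2) * g = c * (g * wx0) + p2 * g" by (simp add: algebra_simps)
    show ?thesis using a cc unfolding e1 e2 by linarith
  qed
  have "c * (g * wx0) < d^2 / 16"

  proof -
    have "c * (g * wx0) \<le> c * (exp (g * x0) * (exp (l * x0) - 1))"
      using gw cpos by (intro mult_left_mono) auto
    then show ?thesis using delta by linarith
  qed
  moreover have "(A - phi) * (A + phi - c) \<le> - (d^2 / 16)"
  proof -
    define t where "t = A - phi"
    have t: "d/4 \<le> t" "t \<le> 3*d/4" using A unfolding t_def lo_def hi_def by auto
    have "(t - d/4) * (t - 3*d/4) \<le> 0" using t by (intro mult_nonneg_nonpos) auto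
    moreover have "A + phi - c = t - d" unfolding t_def d_def by simp
    moreover have "(t - d/4) * (t - 3*d/4) = t * (t - d) + 3 * d^2 / 16"
      by (simp add: field_simps power2_eq_square)
    ultimately have "t * (t - d) \<le> - (3 * d^2 / 16)" by linarith
    moreover have "0 \<le> d^2" by simp
    moreover have "t * (t - d) = (A - phi) * (A + phi - c)" using \<open>A + phi - c = t - d\<close> by (simp add: t_def)
    ultimately show ?thesis by linarith
  qed
  moreover have "(A - phi) * (A + phi - c) = A*A - phi*phi - c * (A - phi)" by (simp add: algebra_simps)
  ultimately show False using main by linarith
qed

theorem lemma9:
  fixes F :: "real measure"
  assumes "prob_space F"
    and "sets F = sets borel"
    and "measure F {..<0} = 0"
    and "\<And>x. tail F x > 0"
    and "0 < gamma_hat F" and "gamma_hat F < \<infinity>"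
    and "mgf F (real_of_ereal (gamma_hat F)) < \<infinity>"
  shows "Liminf at_top (\<lambda>x. ereal (tail (F \<star> F) x / tail F x))
           \<le> ereal (2 * enn2real (mgf F (real_of_ereal (gamma_hat F)))) \<and>
         Limsup at_top (\<lambda>x. ereal (tail (F \<star> F) x / tail F x))
           \<ge> ereal (2 * enn2real (mgf F (real_of_ereal (gamma_hat F))))"
proof -
  note PS = assms(1) and sF = assms(2) and tpos = assms(4)
  interpret prob_space F by fact
  define g where "g = real_of_ereal (gamma_hat F)"
  have gh: "gamma_hat F = ereal g" unfolding g_def using assms(5,6) by (cases "gamma_hat F") auto
  have g: "g > 0" using assms(5) gh by simp
  define phi where "phi = enn2real (mgf F g)"
  have phi: "mgf F g = ennreal phi" unfolding phi_def using assms(7) g_def by simp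
  have phi0: "0 \<le> phi" unfolding phi_def by simp
  have AE0: "AE x in F. 0 \<le> x"
  proof (rule AE_I[of _ _ "{..<0}"])
    show "{x \<in> space F. \<not> 0 \<le> x} \<subseteq> {..<0}" by auto
    show "emeasure F {..<0} = 0" using assms(3) by (simp add: emeasure_eq_measure)
    show "{..<0} \<in> sets F" using sF by simp
  qed
  have maxi: "mgf F (g + l) = top" if l: "l > 0" for l
  proof (rule ccontr)
    assume "mgf F (g + l) \<noteq> top"
    then have "mgf F (g + l) < \<infinity>" by (simp add: top.not_eq_extremum)
    then have "ereal (g + l) \<in> {ereal g | g. mgf F g < \<infinity>}" by blast
    then have "ereal (g + l) \<le> gamma_hat F" unfolding gamma_hat_def by (rule Sup_upper)
    then show False using gh l by simp
  qed
  let ?f = "\<lambda>x. ereal (tail (F \<star> F) x / tail F x)"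
  have P1: "Liminf at_top ?f \<le> ereal (2 * phi)"
  proof (rule ccontr)
    assume "\<not> ?thesis"
    then have "ereal (2 * phi) < Liminf at_top ?f" by simp
    then obtain z where z: "ereal (2 * phi) < z" "z < Liminf at_top ?f" using dense by blast
    then obtain c where zc: "z = ereal c" by (cases z) auto
    have "eventually (\<lambda>x. ?f x > z) at_top" by (rule less_LiminfD[OF z(2)])
    then obtain N where N: "\<And>x. x \<ge> N \<Longrightarrow> ?f x > z" by (auto simp: eventually_at_top_linorder)
    show False
    proof (rule part_liminf[OF PS sF AE0 g phi phi0 maxi])
      show "2 * phi < c" using z zc by simp
      show "0 \<le> max N 0" by simp
      fix u assume "max N 0 \<le> u"
      then have "c < tail (F \<star> F) u / tail F u" using N[of u] zc by simp
      then show "c * tail F u < tail (F \<star> F) u" using tpos[of u] by (simp add: pos_less_divide_eq)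
    qed
  qed
  have P2: "ereal (2 * phi) \<le> Limsup at_top ?f"
  proof (rule ccontr)
    assume "\<not> ?thesis"
    then have "Limsup at_top ?f < ereal (2 * phi)" by simp
    then obtain z where z: "Limsup at_top ?f < z" "z < ereal (2 * phi)" using dense by blast
    then obtain c where zc: "z = ereal c" by (cases z) auto
    have "eventually (\<lambda>x. ?f x < z) at_top" by (rule Limsup_lessD[OF z(1)])
    then obtain N where N: "\<And>x. x \<ge> N \<Longrightarrow> ?f x < z" by (auto simp: eventually_at_top_linorder)
    show False
    proof (rule part_limsup[OF PS sF AE0 tpos g phi])
      show "c < 2 * phi" using z zc by simp
      fix u assume "N \<le> u"
      then have "tail (F \<star> F) u / tail F u < c" using N[of u] zc by simp
      then show "tail (F \<star> F) u < c * tail F u" using tpos[of u] by (simp add: pos_divide_less_eq)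
    qed
  qed
  show ?thesis using P1 P2 unfolding phi_def g_def by simp
qed

end
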